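(* In the setting of the augmented matrices $\widehat{\mathbf A}^k=\mathbf S^k\mathbf C^k$ (column-stochastic, with all entries of the rows indexed by $\mathcal V$ of $\widehat{\mathbf A}^{k+K_1-1:k}$ bounded below by $\eta=\bar m^{K_1}$), there exists a sequence of stochastic vectors $\{\boldsymbol\xi^k\}_{k\in\mathbb N_0}\subset\mathbb R^S$ such that for all $k\ge t\ge0$ and all $i,j\in\{1,\dots,S\}$, $$|\widehat A^{k:t}_{ij}-\xi_i^k|\le C\rho^{k-t},\qquad C=2\frac{1+\bar m^{-K_1}}{1-\bar m^{K_1}},\quad\rho=(1-\bar m^{K_1})^{1/K_1}\in(0,1).$$ Furthermore $\xi_i^k\ge\eta$ for all $i\in\mathcal V$ and $k\in\mathbb N_0$.
   Context: $\mathcal G=(\mathcal V,\mathcal E)$, $\mathcal V=\{1,\dots,I\}$, strongly connected digraph without self-loops; $\mathcal N_i^{\rm in}=\{j:(j,i)\in\mathcal E\}$, $\mathcal N_i^{\rm out}=\{j:(i,j)\in\mathcal E\}$. $A=(a_{ij})$ column-stochastic with $a_{ii}\ge\bar m$, $a_{ij}\ge\bar m$ for $(j,i)\in\mathcal E$, $a_{ij}=0$ otherwise, $\bar m\in(0,1)$. Asynchrony model: $(i^k,\mathbf d^k)$, $i^k\in\mathcal V$, $\mathbf d^k=(d_j^k)_{j\in\mathcal N^{\rm in}_{i^k}}$, every agent appears among $i^k,\dots,i^{k+T-1}$ for all $k$, $0\le d_j^k\le D$; $K_1=(2I-1)T+ID$. Counters: $\tau_{ij}^{-1}=-D$; $\tau_{i^kj}^k=\max(\tau_{i^kj}^{k-1},k-d_j^k)$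 for $j\in\mathcal N^{\rm in}_{i^k}$, unchanged otherwise. $\widehat{\mathcal V}=\mathcal V\cup\{(j,i)^d:(j,i)\in\mathcal E,\ 0\le d\le D\}$, $S=|\widehat{\mathcal V}|$. $R^k=\{(j,i^k)^d:j\in\mathcal N^{\rm in}_{i^k},\ k-\tau^k_{i^kj}\le d\le D\}$. $\mathbf C^k$: $C^k_{i^k m}=1$ for $m\in R^k$, $C^k_{mm}=1$ for $m\notin R^k$, else $0$. $\mathbf S^k$: $S^k_{(i^k,j)^0,i^k}=a_{ji^k}$ ($j\in\mathcal N^{\rm out}_{i^k}$), $S^k_{i^ki^k}=a_{i^ki^k}$, $S^k_{hh}=1$ for $h\in\mathcal V\setminus\{i^k\}$, $S^k_{(i,j)^{d+1},(i,j)^d}=1$ ($0\le d\le D-1$), $S^k_{(i,j)^D,(i,j)^D}=1$, else $0$. $\widehat{\mathbf A}^{k:t}=\widehat{\mathbf A}^k\cdots\widehat{\mathbf A}^t$. *)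

theory Defs
  imports Main "HOL-Analysis.Analysis"
begin

text \<open>Agents are the naturals 1..I. Nodes of the augmented graph: an agent, or a
  buffer node Bf j i d standing for (j,i)^d with (j,i) an edge and 0 <= d <= D.\<close>

datatype node = Ag nat | Bf nat nat nat

definition Nin :: "(nat \<times> nat) set \<Rightarrow> nat \<Rightarrow> nat set" where
  "Nin E i = {j. (j, i) \<in> E}"

definition Nout :: "(nat \<times> nat) set \<Rightarrow> nat \<Rightarrow> nat set" where
  "Nout E i = {j. (i, j) \<in> E}"

definition Vhat :: "nat \<Rightarrow> (nat \<times> nat) set \<Rightarrow> nat \<Rightarrow> node set" where
  "Vhat I E D = Ag ` {1..I} \<union> {Bf j i d | j i d. (j, i) \<in> E \<and> d \<le> D}"

text \<open>tauPre (Suc k) is the counter tau^k; tauPre 0 is tau^{-1} = -D.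
  ik k is the agent i^k, dl k j is the delay d_j^k.\<close>
primrec tauPre :: "(nat \<times> nat) set \<Rightarrow> (nat \<Rightarrow> nat) \<Rightarrow> (nat \<Rightarrow> nat \<Rightarrow> nat) \<Rightarrow> nat
    \<Rightarrow> nat \<Rightarrow> nat \<Rightarrow> nat \<Rightarrow> int" where
  "tauPre E ik dl D 0 i j = - int D"
| "tauPre E ik dl D (Suc k) i j =
     (if i = ik k \<and> j \<in> Nin E i
      then max (tauPre E ik dl D k i j) (int k - int (dl k j))
      else tauPre E ik dl D k i j)"

definition tau :: "(nat \<times> nat) set \<Rightarrow> (nat \<Rightarrow> nat) \<Rightarrow> (nat \<Rightarrow> nat \<Rightarrow> nat) \<Rightarrow> nat
    \<Rightarrow> nat \<Rightarrow> nat \<Rightarrow> nat \<Rightarrow> int" where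
  "tau E ik dl D k i j = tauPre E ik dl D (Suc k) i j"

definition Rset :: "(nat \<times> nat) set \<Rightarrow> (nat \<Rightarrow> nat) \<Rightarrow> (nat \<Rightarrow> nat \<Rightarrow> nat) \<Rightarrow> nat
    \<Rightarrow> nat \<Rightarrow> node set" where
  "Rset E ik dl D k = {Bf j (ik k) d | j d. j \<in> Nin E (ik k)
      \<and> int k - tau E ik dl D k (ik k) j \<le> int d \<and> d \<le> D}"

definition Cmat :: "(nat \<times> nat) set \<Rightarrow> (nat \<Rightarrow> nat) \<Rightarrow> (nat \<Rightarrow> nat \<Rightarrow> nat) \<Rightarrow> nat
    \<Rightarrow> nat \<Rightarrow> node \<Rightarrow> node \<Rightarrow> real" where
  "Cmat E ik dl D k r m =
     (if m \<in> Rset E ik dl D k then (if r = Ag (ik k) then 1 else 0)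
      else (if r = m then 1 else 0))"

definition Smat :: "(nat \<Rightarrow> nat \<Rightarrow> real) \<Rightarrow> (nat \<times> nat) set \<Rightarrow> (nat \<Rightarrow> nat) \<Rightarrow> nat
    \<Rightarrow> nat \<Rightarrow> node \<Rightarrow> node \<Rightarrow> real" where
  "Smat a E ik D k r c =
     (case c of
        Ag h \<Rightarrow>
          (if h = ik k then
             (case r of
                Ag h' \<Rightarrow> (if h' = ik k then a (ik k) (ik k) else 0)
              | Bf i j d \<Rightarrow> (if i = ik k \<and> j \<in> Nout E (ik k) \<and> d = 0 then a j (ik k) else 0))
           else (if r = c then 1 else 0))
      | Bf i j d \<Rightarrow>
          (if d < D then (if r = Bf i j (Suc d) then 1 else 0)
           else (if r = c then 1 else 0)))"

definition mmult :: "node set \<Rightarrow> (node \<Rightarrow> node \<Rightarrow> real) \<Rightarrow> (node \<Rightarrow> node \<Rightarrow> real)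
    \<Rightarrow> node \<Rightarrow> node \<Rightarrow> real" where
  "mmult V M N r c = (\<Sum>l\<in>V. M r l * N l c)"

definition Ahat :: "nat \<Rightarrow> (nat \<times> nat) set \<Rightarrow> (nat \<Rightarrow> nat \<Rightarrow> real) \<Rightarrow> (nat \<Rightarrow> nat)
    \<Rightarrow> (nat \<Rightarrow> nat \<Rightarrow> nat) \<Rightarrow> nat \<Rightarrow> nat \<Rightarrow> node \<Rightarrow> node \<Rightarrow> real" where
  "Ahat I E a ik dl D k = mmult (Vhat I E D) (Smat a E ik D k) (Cmat E ik dl D k)"

text \<open>Aprod ... t n is the product hat A^{t+n:t} = hat A^{t+n} ... hat A^t.\<close>
primrec Aprod :: "nat \<Rightarrow> (nat \<times> nat) set \<Rightarrow> (nat \<Rightarrow> nat \<Rightarrow> real) \<Rightarrow> (nat \<Rightarrow> nat)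
    \<Rightarrow> (nat \<Rightarrow> nat \<Rightarrow> nat) \<Rightarrow> nat \<Rightarrow> nat \<Rightarrow> nat \<Rightarrow> node \<Rightarrow> node \<Rightarrow> real" where
  "Aprod I E a ik dl D t 0 = Ahat I E a ik dl D t"
| "Aprod I E a ik dl D t (Suc n) =
     mmult (Vhat I E D) (Ahat I E a ik dl D (t + Suc n)) (Aprod I E a ik dl D t n)"

definition stochastic_vec :: "node set \<Rightarrow> (node \<Rightarrow> real) \<Rightarrow> bool" where
  "stochastic_vec V x \<longleftrightarrow> (\<forall>v\<in>V. 0 \<le> x v) \<and> (\<Sum>v\<in>V. x v) = 1"

end

theory Submission
  imports Defs
begin


locale setting =
  fixes I T D :: nat and E :: "(nat \<times> nat) set" and a :: "nat \<Rightarrow> nat \<Rightarrow> real"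
    and mbar :: real and ik :: "nat \<Rightarrow> nat" and dl :: "nat \<Rightarrow> nat \<Rightarrow> nat"
  assumes E_sub: "E \<subseteq> {1..I} \<times> {1..I}"
    and no_loops: "\<forall>i. (i, i) \<notin> E"
    and strong: "\<forall>i\<in>{1..I}. \<forall>j\<in>{1..I}. (i, j) \<in> E\<^sup>*"
    and mbar0: "0 < mbar" and mbar1: "mbar < 1"
    and col_stoch: "\<forall>j\<in>{1..I}. (\<Sum>i\<in>{1..I}. a i j) = 1"
    and diag: "\<forall>i\<in>{1..I}. a i i \<ge> mbar"
    and edge: "\<forall>i j. (j, i) \<in> E \<longrightarrow> a i j \<ge> mbar"
    and zero: "\<forall>i\<in>{1..I}. \<forall>j\<in>{1..I}. i \<noteq> j \<and> (j, i) \<notin> E \<longrightarrow> a i j = 0"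
    and ik_V: "\<forall>k. ik k \<in> {1..I}"
    and ik_T: "\<forall>k. \<forall>i\<in>{1..I}. \<exists>s<T. ik (k + s) = i"
    and delays: "\<forall>k. \<forall>j\<in>Nin E (ik k). dl k j \<le> D"
begin

abbreviation "V \<equiv> Vhat I E D"
abbreviation "A k \<equiv> Ahat I E a ik dl D k"
abbreviation "S k \<equiv> Smat a E ik D k"
abbreviation "Rs k \<equiv> Rset E ik dl D k"

lemma mem_V_Ag[simp]: "Ag h \<in> V \<longleftrightarrow> h \<in> {1..I}"
  by (auto simp: Vhat_def)

lemma mem_V_Bf[simp]: "Bf j i d \<in> V \<longleftrightarrow> (j, i) \<in> E \<and> d \<le> D"
  by (auto simp: Vhat_def)

lemma finV: "finite V"
proof -
  have "{Bf j i d | j i d. (j, i) \<in> E \<and> d \<le> D} \<subseteq> (\<lambda>(j,i,d). Bf j i d) ` ({1..I} \<times> {1..I} \<times> {0..D})"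
    using E_sub by (force simp: image_iff)
  then show ?thesis unfolding Vhat_def by (meson finite_Un finite_imageI finite_SigmaI finite_atLeastAtMost finite_subset)
qed

lemma I_pos: "1 \<le> I" using ik_V by (metis atLeastAtMost_iff le_trans)

lemma T_pos: "1 \<le> T"
proof -
  from ik_T ik_V obtain s where "s < T" by blast
  then show ?thesis by simp
qed

lemma ik_ge[simp]: "Suc 0 \<le> ik k" and ik_le[simp]: "ik k \<le> I" using ik_V by auto

lemma ikV[simp]: "Ag (ik k) \<in> V" using ik_V by simp

lemma Nout_E: "j \<in> Nout E i \<longleftrightarrow> (i, j) \<in> E" by (simp add: Nout_def)
lemma Nin_E: "j \<in> Nin E i \<longleftrightarrow> (j, i) \<in> E" by (simp add: Nin_def)

lemma S_nonneg: "0 \<le> S k r c"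
proof -
  have d: "a (ik k) (ik k) \<ge> mbar" using diag ik_V by blast
  have e: "j \<in> Nout E (ik k) \<Longrightarrow> a j (ik k) \<ge> mbar" for j using edge by (simp add: Nout_E)
  show ?thesis unfolding Smat_def using d e mbar0
    by (auto split: node.splits) (smt (verit))+
qed

lemma Rs_Bf: "m \<in> Rs k \<Longrightarrow> \<exists>j d. m = Bf j (ik k) d \<and> (j, ik k) \<in> E \<and> d \<le> D"
  by (auto simp: Rset_def Nin_E)

lemma Rs_V: "m \<in> Rs k \<Longrightarrow> m \<in> V" using Rs_Bf by fastforce

lemma A_col: assumes "c \<in> V"
  shows "A k r c = (if c \<in> Rs k then S k r (Ag (ik k)) else S k r c)"
  using assms unfolding Ahat_def mmult_def Cmat_def
  by (auto simp: if_distrib[of "\<lambda>x. _ * x"] sum.delta Rs_V finV cong: if_cong)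



lemma S_ik_formula: "S k r (Ag (ik k)) = (case r of Ag h' \<Rightarrow> (if h' = ik k then a (ik k) (ik k) else 0)
              | Bf i j d \<Rightarrow> (if i = ik k \<and> j \<in> Nout E (ik k) \<and> d = 0 then a j (ik k) else 0))"
  unfolding Smat_def by simp

lemma W_sub: "insert (Ag (ik k)) ((\<lambda>j. Bf (ik k) j 0) ` Nout E (ik k)) \<subseteq> V"
  by (auto simp: Nout_E)

lemma W_z: "\<forall>r\<in>V - insert (Ag (ik k)) ((\<lambda>j. Bf (ik k) j 0) ` Nout E (ik k)). S k r (Ag (ik k)) = 0"
proof
  fix r assume "r \<in> V - insert (Ag (ik k)) ((\<lambda>j. Bf (ik k) j 0) ` Nout E (ik k))"
  then show "S k r (Ag (ik k)) = 0"
    by (cases r) (auto simp: S_ik_formula)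
qed



lemma S_colsum_ik: "(\<Sum>r\<in>V. S k r (Ag (ik k))) = 1"
proof -
  define i where "i = ik k"
  define B where "B = (\<lambda>j. Bf i j 0) ` Nout E i"
  have sub: "insert (Ag i) B \<subseteq> V" unfolding i_def B_def by (rule W_sub)
  have z: "\<forall>r\<in>V - insert (Ag i) B. S k r (Ag (ik k)) = 0" unfolding i_def B_def by (rule W_z)
  have "B \<subseteq> V" using sub by simp
  then have fB: "finite B" using finV by (rule finite_subset)
  have nB: "Ag i \<notin> B" unfolding B_def by auto
  have "(\<Sum>r\<in>V. S k r (Ag (ik k))) = (\<Sum>r\<in>insert (Ag i) B. S k r (Ag (ik k)))"
    using sum.mono_neutral_right[OF finV sub z] .
  also have "\<dots> = S k (Ag i) (Ag (ik k)) + (\<Sum>r\<in>B. S k r (Ag (ik k)))"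
    using fB nB by (rule sum.insert)
  also have "S k (Ag i) (Ag (ik k)) = a i i" by (simp add: S_ik_formula i_def)
  also have "(\<Sum>r\<in>B. S k r (Ag (ik k))) = (\<Sum>j\<in>Nout E i. a j i)"
  proof -
    have inj: "inj_on (\<lambda>j. Bf i j 0) (Nout E i)" by (auto simp: inj_on_def)
    have "(\<Sum>r\<in>B. S k r (Ag (ik k))) = (\<Sum>j\<in>Nout E i. S k (Bf i j 0) (Ag (ik k)))"
      unfolding B_def by (rule sum.reindex[OF inj, unfolded comp_def])
    also have "\<dots> = (\<Sum>j\<in>Nout E i. a j i)"
      by (rule sum.cong) (auto simp: S_ik_formula i_def)
    finally show ?thesis .
  qed
  also have "(\<Sum>j\<in>Nout E i. a j i) = (\<Sum>j\<in>{1..I} - {i}. a j i)"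
  proof (rule sum.mono_neutral_left)
    show "Nout E i \<subseteq> {1..I} - {i}" using E_sub no_loops by (auto simp: Nout_E)
    show "\<forall>j\<in>{1..I} - {i} - Nout E i. a j i = 0"
    proof
      fix j assume "j \<in> {1..I} - {i} - Nout E i"
      then show "a j i = 0" using zero ik_V unfolding i_def by (auto simp: Nout_E)
    qed
  qed simp
  also have "a i i + (\<Sum>j\<in>{1..I} - {i}. a j i) = (\<Sum>j\<in>{1..I}. a j i)"
    using sum.remove[of "{1..I}" i "\<lambda>j. a j i"] ik_V unfolding i_def by simp
  also have "\<dots> = 1" using col_stoch ik_V unfolding i_def by simp
  finally show ?thesis .
qed



lemma S_colsum: assumes "c \<in> V" shows "(\<Sum>r\<in>V. S k r c) = 1"
proof (cases c)
  case (Ag h)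
  show ?thesis
  proof (cases "h = ik k")
    case False
    then have "S k r c = (if r = c then 1 else 0)" for r
      unfolding Smat_def Ag by simp
    then show ?thesis using assms finV by simp
  next
    case True
    then show ?thesis using S_colsum_ik Ag by simp
  qed
next
  case (Bf i j d)
  then have e: "(i, j) \<in> E" "d \<le> D" using assms by auto
  show ?thesis
  proof (cases "d < D")
    case True
    then have "S k r c = (if r = Bf i j (Suc d) then 1 else 0)" for r
      unfolding Smat_def Bf by simp
    then show ?thesis using e True finV by simp
  next
    case False
    then have "S k r c = (if r = c then 1 else 0)" for r
      unfolding Smat_def Bf by simp
    then show ?thesis using assms finV by simp
  qed
qed

lemma A_colsum: assumes "c \<in> V" shows "(\<Sum>r\<in>V. A k r c) = 1"
  using assms by (cases "c \<in> Rs k") (simp_all add: A_col S_colsum Rs_V)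

lemma A_nonneg: "0 \<le> A k r c"
  unfolding Ahat_def mmult_def Cmat_def by (auto intro!: sum_nonneg simp: S_nonneg)

fun Q :: "nat \<Rightarrow> nat \<Rightarrow> node \<Rightarrow> node \<Rightarrow> real" where
  "Q s 0 = (\<lambda>r c. if r = c then 1 else 0)"
| "Q s (Suc n) = mmult V (A (s + n)) (Q s n)"

lemma Q_nonneg: "0 \<le> Q s n r c"
  by (induction n arbitrary: r c) (auto simp: mmult_def intro!: sum_nonneg mult_nonneg_nonneg A_nonneg)

lemma Q_colsum: "c \<in> V \<Longrightarrow> (\<Sum>r\<in>V. Q s n r c) = 1"
proof (induction n)
  case 0 then show ?case using finV by simp
next
  case (Suc n)
  have "(\<Sum>r\<in>V. Q s (Suc n) r c) = (\<Sum>r\<in>V. \<Sum>l\<in>V. A (s+n) r l * Q s n l c)"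
    by (simp add: mmult_def)
  also have "\<dots> = (\<Sum>l\<in>V. \<Sum>r\<in>V. A (s+n) r l * Q s n l c)"
    by (rule sum.swap)
  also have "\<dots> = (\<Sum>l\<in>V. (\<Sum>r\<in>V. A (s+n) r l) * Q s n l c)"
    by (simp add: sum_distrib_right)
  also have "\<dots> = (\<Sum>l\<in>V. Q s n l c)" by (rule sum.cong) (simp_all add: A_colsum)
  finally show ?case using Suc by simp
qed

lemma Q_le1: assumes "r \<in> V" "c \<in> V" shows "Q s n r c \<le> 1"
proof -
  have "Q s n r c \<le> (\<Sum>r\<in>V. Q s n r c)"
    by (rule member_le_sum) (auto simp: Q_nonneg assms finV)
  then show ?thesis using Q_colsum assms by simp
qed

lemma Q_assoc: assumes "r \<in> V" "c \<in> V"
  shows "Q s (n + m) r c = (\<Sum>l\<in>V. Q (s + n) m r l * Q s n l c)"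
  using assms(1)
proof (induction m arbitrary: r)
  case 0
  have "(\<Sum>l\<in>V. Q (s + n) 0 r l * Q s n l c) = (\<Sum>l\<in>V. if l = r then Q s n r c else 0)"
    by (rule sum.cong) auto
  also have "\<dots> = Q s n r c" using 0 finV by simp
  finally show ?case by simp
next
  case (Suc m)
  have "Q s (n + Suc m) r c = (\<Sum>l\<in>V. A (s + (n + m)) r l * Q s (n + m) l c)"
    by (simp add: mmult_def)
  also have "\<dots> = (\<Sum>l\<in>V. A (s + (n + m)) r l * (\<Sum>p\<in>V. Q (s + n) m l p * Q s n p c))"
    using Suc.IH by simp
  also have "\<dots> = (\<Sum>l\<in>V. \<Sum>p\<in>V. A (s + n + m) r l * Q (s + n) m l p * Q s n p c)"
    by (simp add: sum_distrib_left mult.assoc add.assoc)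
  also have "\<dots> = (\<Sum>p\<in>V. \<Sum>l\<in>V. A (s + n + m) r l * Q (s + n) m l p * Q s n p c)"
    by (rule sum.swap)
  also have "\<dots> = (\<Sum>p\<in>V. Q (s + n) (Suc m) r p * Q s n p c)"
    by (simp add: mmult_def sum_distrib_right)
  finally show ?case .
qed

lemma Aprod_Q: assumes "r \<in> V" "c \<in> V"
  shows "Aprod I E a ik dl D t n r c = Q t (Suc n) r c"
  using assms(1)
proof (induction n arbitrary: r)
  case 0
  have "Q t (Suc 0) r c = (\<Sum>l\<in>V. if l = c then A t r c else 0)"
    by (simp add: mmult_def) (rule sum.cong, auto)
  also have "\<dots> = A t r c" using assms(2) finV by simp
  finally show ?case by simp
next
  case (Suc n)
  have "Aprod I E a ik dl D t (Suc n) r c = (\<Sum>l\<in>V. A (t + Suc n) r l * Aprod I E a ik dl D t n l c)"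
    by (simp add: mmult_def)
  also have "\<dots> = (\<Sum>l\<in>V. A (t + Suc n) r l * Q t (Suc n) l c)"
    by (rule sum.cong) (auto simp: Suc.IH)
  finally show ?case by (simp add: mmult_def)
qed

end

context setting begin
definition Rch :: "nat \<Rightarrow> nat \<Rightarrow> node \<Rightarrow> node \<Rightarrow> bool" where
  "Rch s n c r \<longleftrightarrow> r \<in> V \<and> mbar ^ n \<le> Q s n r c"

lemma Rch_step: assumes "Rch s n c r" "r' \<in> V" "mbar \<le> A (s+n) r' r"
  shows "Rch s (Suc n) c r'"
proof -
  have r: "r \<in> V" and q: "mbar ^ n \<le> Q s n r c" using assms(1) by (auto simp: Rch_def)
  have "mbar * mbar ^ n \<le> A (s+n) r' r * Q s n r c"
    by (rule mult_mono) (use assms(3) q A_nonneg mbar0 in auto)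
  also have "\<dots> \<le> (\<Sum>l\<in>V. A (s+n) r' l * Q s n l c)"
    by (rule member_le_sum) (auto simp: A_nonneg Q_nonneg finV r)
  finally show ?thesis using assms(2) by (simp add: Rch_def mmult_def)
qed

lemma Ag_notin_Rs: "Ag h \<notin> Rs k" using Rs_Bf by blast

lemma A_agent: "h \<in> {1..I} \<Longrightarrow> mbar \<le> A k (Ag h) (Ag h)"
  using diag mbar1 by (auto simp: A_col Ag_notin_Rs Smat_def)

lemma A_send: "(ik k, j) \<in> E \<Longrightarrow> mbar \<le> A k (Bf (ik k) j 0) (Ag (ik k))"
  using edge by (auto simp: A_col Ag_notin_Rs S_ik_formula Nout_E)

lemma A_absorb: assumes "Bf j i d \<in> Rs k"
  shows "ik k = i \<and> mbar \<le> A k (Ag i) (Bf j i d)"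
proof -
  from Rs_Bf[OF assms] have i: "i = ik k" and v: "Bf j i d \<in> V" by auto
  have "A k (Ag i) (Bf j i d) = a (ik k) (ik k)"
    using v assms by (simp add: A_col S_ik_formula i)
  then show ?thesis using diag i by auto
qed

lemma A_shift: assumes "Bf j i d \<notin> Rs k" "(j, i) \<in> E" "d \<le> D"
  shows "mbar \<le> A k (Bf j i (if d < D then Suc d else d)) (Bf j i d)"
  using assms mbar1 by (auto simp: A_col Smat_def)

lemma tau_ge: assumes "j \<in> Nin E (ik k)"
  shows "int k - int (dl k j) \<le> tau E ik dl D k (ik k) j"
  using assms by (simp add: tau_def)

lemma D_in_Rs: assumes "(j, i) \<in> E" "ik k = i" shows "Bf j i D \<in> Rs k"
proof -
  have j: "j \<in> Nin E (ik k)" using assms by (simp add: Nin_E)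
  have "dl k j \<le> D" using delays j by blast
  then have "int k - tau E ik dl D k (ik k) j \<le> int D" using tau_ge[OF j] by linarith
  then show ?thesis unfolding Rset_def using j assms(2) by blast
qed

lemma buf_prog: assumes "Rch s n c (Bf j i d)" "(j,i) \<in> E" "d \<le> D"
  shows "p \<le> D - d \<Longrightarrow> (\<exists>n'\<le>n+p. Rch s n' c (Ag i)) \<or> Rch s (n+p) c (Bf j i (d+p))"
proof (induction p)
  case 0 then show ?case using assms(1) by simp
next
  case (Suc p)
  then have "(\<exists>n'\<le>n+p. Rch s n' c (Ag i)) \<or> Rch s (n+p) c (Bf j i (d+p))" by simp
  then show ?case
  proof
    assume "\<exists>n'\<le>n+p. Rch s n' c (Ag i)"
    then obtain n' where "n' \<le> n+p" "Rch s n' c (Ag i)" by blast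
    then show ?case by (intro disjI1 exI[of _ n']) simp
  next
    assume R: "Rch s (n+p) c (Bf j i (d+p))"
    have lt: "d + p < D" using Suc.prems by simp
    have iV: "Ag i \<in> V" using assms(2) E_sub by auto
    show ?case
    proof (cases "Bf j i (d+p) \<in> Rs (s + (n+p))")
      case True
      from A_absorb[OF True] have "mbar \<le> A (s+(n+p)) (Ag i) (Bf j i (d+p))" by simp
      from Rch_step[OF R iV this] show ?thesis by auto
    next
      case False
      from A_shift[OF False assms(2)] lt
      have "mbar \<le> A (s+(n+p)) (Bf j i (Suc (d+p))) (Bf j i (d+p))" by simp
      from Rch_step[OF R _ this] lt assms(2) show ?thesis by simp
    qed
  qed
qed

lemma buf_D: assumes "Rch s n c (Bf j i D)" "(j,i) \<in> E"
  shows "(\<exists>n'\<le>n+q. Rch s n' c (Ag i)) \<or> Rch s (n+q) c (Bf j i D)"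
proof (induction q)
  case 0 then show ?case using assms(1) by simp
next
  case (Suc q)
  then show ?case
  proof
    assume "\<exists>n'\<le>n+q. Rch s n' c (Ag i)"
    then obtain n' where "n' \<le> n+q" "Rch s n' c (Ag i)" by blast
    then show ?case by (intro disjI1 exI[of _ n']) simp
  next
    assume R: "Rch s (n+q) c (Bf j i D)"
    have iV: "Ag i \<in> V" using assms(2) E_sub by auto
    show ?case
    proof (cases "Bf j i D \<in> Rs (s + (n+q))")
      case True
      from A_absorb[OF True] have "mbar \<le> A (s+(n+q)) (Ag i) (Bf j i D)" by simp
      from Rch_step[OF R iV this] show ?thesis by auto
    next
      case False
      from A_shift[OF False assms(2)]
      have "mbar \<le> A (s+(n+q)) (Bf j i D) (Bf j i D)" by simp
      from Rch_step[OF R _ this] assms(2) show ?thesis by simp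
    qed
  qed
qed

lemma buf_reach: assumes "Rch s n c (Bf j i d)" "(j,i) \<in> E" "d \<le> D"
  shows "\<exists>n'\<le>n + (D - d) + T. Rch s n' c (Ag i)"
proof -
  have iV: "Ag i \<in> V" and iI: "i \<in> {1..I}" using assms(2) E_sub by auto
  from buf_prog[OF assms, of "D - d"] assms(3)
  have "(\<exists>n'\<le>n+(D-d). Rch s n' c (Ag i)) \<or> Rch s (n+(D-d)) c (Bf j i D)" by simp
  then show ?thesis
  proof
    assume "\<exists>n'\<le>n+(D-d). Rch s n' c (Ag i)" then show ?thesis using le_add1 order_trans by blast
  next
    assume R: "Rch s (n+(D-d)) c (Bf j i D)"
    define m where "m = n + (D - d)"
    obtain q where q: "q < T" "ik (s + m + q) = i" using ik_T iI by blast
    from buf_D[OF R[folded m_def] assms(2), of q]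
    show ?thesis
    proof
      assume "\<exists>n'\<le>m+q. Rch s n' c (Ag i)" then show ?thesis using q(1) unfolding m_def
        by (meson add_le_mono le_refl less_imp_le order_trans)
    next
      assume R2: "Rch s (m+q) c (Bf j i D)"
      have "Bf j i D \<in> Rs (s + (m+q))" using D_in_Rs[OF assms(2)] q(2) by (simp add: add.assoc)
      from A_absorb[OF this] have "mbar \<le> A (s+(m+q)) (Ag i) (Bf j i D)" by simp
      from Rch_step[OF R2 iV this] have "Rch s (Suc (m+q)) c (Ag i)" .
      moreover have "Suc (m + q) \<le> n + (D - d) + T" using q(1) unfolding m_def by simp
      ultimately show ?thesis by blast
    qed
  qed
qed

lemma agent_persist: assumes "Rch s n c (Ag h)" "n \<le> n'" shows "Rch s n' c (Ag h)"
  using assms(2)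
proof (induction n' rule: dec_induct)
  case base then show ?case using assms(1) .
next
  case (step m)
  have h: "h \<in> {1..I}" using assms(1) by (simp add: Rch_def)
  from Rch_step[OF step.IH _ A_agent[OF h]] h show ?case by simp
qed

lemma hop: assumes "Rch s n c (Ag h)" "(h, j) \<in> E"
  shows "\<exists>n'\<le>n + (2*T + D). Rch s n' c (Ag j)"
proof -
  have hI: "h \<in> {1..I}" using assms(2) E_sub by auto
  obtain q where q: "q < T" "ik (s + n + q) = h" using ik_T hI by blast
  have R: "Rch s (n+q) c (Ag h)" using agent_persist[OF assms(1)] by simp
  have "mbar \<le> A (s+(n+q)) (Bf h j 0) (Ag h)" using A_send[of "s+(n+q)" j] q(2) assms(2)
    by (simp add: add.assoc)
  from Rch_step[OF R _ this] assms(2) have "Rch s (Suc (n+q)) c (Bf h j 0)" by simp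
  from buf_reach[OF this assms(2)] obtain n' where "n' \<le> Suc (n + q) + D + T" "Rch s n' c (Ag j)" by auto
  moreover have "Suc (n + q) + D + T \<le> n + (2*T + D)" using q(1) by simp
  ultimately show ?thesis by (meson order_trans)
qed

lemma hops: "(h, g) \<in> E ^^ p \<Longrightarrow> Rch s n c (Ag h) \<Longrightarrow> \<exists>n'\<le>n + p*(2*T + D). Rch s n' c (Ag g)"
proof (induction p arbitrary: g)
  case 0 then show ?case by auto
next
  case (Suc p)
  from Suc.prems(1) obtain y where y: "(h, y) \<in> E ^^ p" "(y, g) \<in> E" by auto
  from Suc.IH[OF y(1) Suc.prems(2)] obtain n1 where n1: "n1 \<le> n + p*(2*T+D)" "Rch s n1 c (Ag y)" by auto
  from hop[OF n1(2) y(2)] obtain n2 where "n2 \<le> n1 + (2*T+D)" "Rch s n2 c (Ag g)" by auto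
  moreover have "n1 + (2*T+D) \<le> n + Suc p * (2*T+D)" using n1(1) by simp
  ultimately show ?case by (meson order_trans)
qed
end

context setting begin
lemma short_path: assumes "(h, g) \<in> E\<^sup>*" "h \<in> {1..I}"
  shows "\<exists>p\<le>I - 1. (h, g) \<in> E ^^ p"
proof -
  obtain p0 where p0: "(h, g) \<in> E ^^ p0" using rtrancl_imp_relpow[OF assms(1)] by blast
  define p where "p = (LEAST p. (h, g) \<in> E ^^ p)"
  have P: "(h, g) \<in> E ^^ p" unfolding p_def by (rule LeastI[of _ p0]) (rule p0)
  have minp: "\<And>p'. p' < p \<Longrightarrow> (h, g) \<notin> E ^^ p'" unfolding p_def using not_less_Least by blast
  have "p \<le> I - 1"
  proof (rule ccontr)
    assume "\<not> p \<le> I - 1"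
    then have pI: "I \<le> p" by simp
    from P obtain f where f: "f 0 = h" "f p = g" "\<forall>i<p. (f i, f (Suc i)) \<in> E"
      by (auto simp: relpow_fun_conv)
    have img: "f ` {0..p} \<subseteq> {1..I}"
    proof
      fix x assume "x \<in> f ` {0..p}"
      then obtain i where i: "i \<le> p" "x = f i" by auto
      show "x \<in> {1..I}"
      proof (cases i)
        case 0 then show ?thesis using i f(1) assms(2) by simp
      next
        case (Suc i')
        then have "(f i', f i) \<in> E" using f(3) i(1) by simp
        then show ?thesis using E_sub i(2) by auto
      qed
    qed
    have "\<not> inj_on f {0..p}"
    proof
      assume "inj_on f {0..p}"
      then have "card (f ` {0..p}) = Suc p" by (simp add: card_image)
      moreover have "card (f ` {0..p}) \<le> I" using card_mono[OF _ img] by simp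
      ultimately show False using pI by simp
    qed
    then obtain x y where xy: "x \<le> p" "y \<le> p" "x < y" "f x = f y"
      unfolding inj_on_def by (metis atLeastAtMost_iff linorder_neqE_nat zero_le)
    have 1: "(h, f x) \<in> E ^^ x" unfolding relpow_fun_conv
      by (rule exI[of _ f]) (use f xy in auto)
    have 2: "(f y, g) \<in> E ^^ (p - y)" unfolding relpow_fun_conv
      by (rule exI[of _ "\<lambda>i. f (y + i)"]) (use f xy in auto)
    have "(h, g) \<in> E ^^ (x + (p - y))" unfolding relpow_add using 1 2 xy(4) by auto
    moreover have "x + (p - y) < p" using xy by simp
    ultimately show False using minp by blast
  qed
  then show ?thesis using P by blast
qed

lemma K_eq: "T + D + (I - 1) * (2*T + D) = (2 * I - 1) * T + I * D"
proof -
  obtain I' where "I = Suc I'" using I_pos by (cases I) auto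
  then show ?thesis by (simp add: algebra_simps)
qed

lemma positivity: assumes "c \<in> V" "g \<in> {1..I}"
  shows "mbar ^ ((2 * I - 1) * T + I * D) \<le> Q s ((2 * I - 1) * T + I * D) (Ag g) c"
proof -
  let ?K = "(2 * I - 1) * T + I * D"
  have R0: "Rch s 0 c c" using assms(1) by (simp add: Rch_def)
  have "\<exists>h n0. h \<in> {1..I} \<and> n0 \<le> T + D \<and> Rch s n0 c (Ag h)"
  proof (cases c)
    case (Ag h) then show ?thesis using R0 assms(1) by auto
  next
    case (Bf j i d)
    then have e: "(j, i) \<in> E" "d \<le> D" using assms(1) by auto
    from buf_reach[OF R0[unfolded Bf] e] obtain n' where "n' \<le> D - d + T" "Rch s n' c (Ag i)"
      by (auto simp: Bf)
    moreover have "i \<in> {1..I}" using e E_sub by auto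
    ultimately show ?thesis by (intro exI[of _ i] exI[of _ n']) auto
  qed
  then obtain h n0 where h: "h \<in> {1..I}" "n0 \<le> T + D" "Rch s n0 c (Ag h)" by blast
  obtain p where p: "p \<le> I - 1" "(h, g) \<in> E ^^ p" using short_path strong h(1) assms(2) by blast
  from hops[OF p(2) h(3)] obtain n' where n': "n' \<le> n0 + p * (2*T+D)" "Rch s n' c (Ag g)" by blast
  have "n0 + p * (2*T+D) \<le> T + D + (I - 1) * (2*T + D)"
    using h(2) p(1) by (intro add_mono mult_right_mono) auto
  then have "n' \<le> ?K" using n'(1) K_eq by simp
  from agent_persist[OF n'(2) this] show ?thesis by (simp add: Rch_def)
qed
end

context setting begin
lemma contract:
  fixes P :: "node \<Rightarrow> node \<Rightarrow> real" and x :: "node \<Rightarrow> real"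
  assumes colsum: "\<forall>j\<in>V. (\<Sum>i\<in>V. P i j) = 1" and nonneg: "\<forall>i\<in>V. \<forall>j\<in>V. 0 \<le> P i j"
    and r0: "r0 \<in> V" and row: "\<forall>j\<in>V. \<eta> \<le> P r0 j" and sum0: "(\<Sum>j\<in>V. x j) = 0"
  shows "(\<Sum>i\<in>V. \<bar>\<Sum>j\<in>V. P i j * x j\<bar>) \<le> (1 - \<eta>) * (\<Sum>j\<in>V. \<bar>x j\<bar>)"
proof -
  have "(\<Sum>j\<in>V. P r0 j * x j) = (\<Sum>j\<in>V. (P r0 j - \<eta>) * x j) + \<eta> * (\<Sum>j\<in>V. x j)"
    by (simp add: sum_distrib_left algebra_simps sum.distrib[symmetric])
  then have e0: "(\<Sum>j\<in>V. P r0 j * x j) = (\<Sum>j\<in>V. (P r0 j - \<eta>) * x j)" using sum0 by simp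
  have a: "\<bar>\<Sum>j\<in>V. P r0 j * x j\<bar> \<le> (\<Sum>j\<in>V. (P r0 j - \<eta>) * \<bar>x j\<bar>)"
  proof -
    have "\<bar>\<Sum>j\<in>V. (P r0 j - \<eta>) * x j\<bar> \<le> (\<Sum>j\<in>V. \<bar>(P r0 j - \<eta>) * x j\<bar>)" by (rule sum_abs)
    also have "\<dots> = (\<Sum>j\<in>V. (P r0 j - \<eta>) * \<bar>x j\<bar>)"
      by (rule sum.cong) (use row in \<open>auto simp: abs_mult\<close>)
    finally show ?thesis using e0 by simp
  qed
  have b: "\<bar>\<Sum>j\<in>V. P i j * x j\<bar> \<le> (\<Sum>j\<in>V. P i j * \<bar>x j\<bar>)" if "i \<in> V" for i
  proof -
    have "\<bar>\<Sum>j\<in>V. P i j * x j\<bar> \<le> (\<Sum>j\<in>V. \<bar>P i j * x j\<bar>)" by (rule sum_abs)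
    also have "\<dots> = (\<Sum>j\<in>V. P i j * \<bar>x j\<bar>)"
      by (rule sum.cong) (use nonneg that in \<open>auto simp: abs_mult\<close>)
    finally show ?thesis .
  qed
  have "(\<Sum>i\<in>V. \<bar>\<Sum>j\<in>V. P i j * x j\<bar>) = \<bar>\<Sum>j\<in>V. P r0 j * x j\<bar> + (\<Sum>i\<in>V - {r0}. \<bar>\<Sum>j\<in>V. P i j * x j\<bar>)"
    using finV r0 by (rule sum.remove)
  also have "\<dots> \<le> (\<Sum>j\<in>V. (P r0 j - \<eta>) * \<bar>x j\<bar>) + (\<Sum>i\<in>V - {r0}. \<Sum>j\<in>V. P i j * \<bar>x j\<bar>)"
    by (intro add_mono a sum_mono b) auto
  also have "(\<Sum>i\<in>V - {r0}. \<Sum>j\<in>V. P i j * \<bar>x j\<bar>) = (\<Sum>j\<in>V. (\<Sum>i\<in>V - {r0}. P i j) * \<bar>x j\<bar>)"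
    by (subst sum.swap) (simp add: sum_distrib_right)
  also have "\<dots> = (\<Sum>j\<in>V. (1 - P r0 j) * \<bar>x j\<bar>)"
  proof (rule sum.cong)
    fix j assume j: "j \<in> V"
    have "(\<Sum>i\<in>V. P i j) = P r0 j + (\<Sum>i\<in>V - {r0}. P i j)" using finV r0 by (rule sum.remove)
    then show "(\<Sum>i\<in>V - {r0}. P i j) * \<bar>x j\<bar> = (1 - P r0 j) * \<bar>x j\<bar>" using colsum j by simp
  qed simp
  also have "(\<Sum>j\<in>V. (P r0 j - \<eta>) * \<bar>x j\<bar>) + (\<Sum>j\<in>V. (1 - P r0 j) * \<bar>x j\<bar>) = (1 - \<eta>) * (\<Sum>j\<in>V. \<bar>x j\<bar>)"
    by (simp add: sum.distrib[symmetric] sum_distrib_left algebra_simps)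
  finally show ?thesis .
qed

definition dlt where "dlt t n j l = (\<Sum>i\<in>V. \<bar>Q t n i j - Q t n i l\<bar>)"

lemma dlt_step: assumes "j \<in> V" "l \<in> V" "r0 \<in> V" "\<forall>p\<in>V. \<eta> \<le> Q (t+n) m r0 p"
  shows "dlt t (n+m) j l \<le> (1 - \<eta>) * dlt t n j l"
proof -
  define x where "x p = Q t n p j - Q t n p l" for p
  have eq: "Q t (n+m) i j - Q t (n+m) i l = (\<Sum>p\<in>V. Q (t+n) m i p * x p)" if "i \<in> V" for i
    using Q_assoc[OF that assms(1)] Q_assoc[OF that assms(2)]
    by (simp add: x_def right_diff_distrib sum_subtractf)
  have "dlt t (n+m) j l = (\<Sum>i\<in>V. \<bar>\<Sum>p\<in>V. Q (t+n) m i p * x p\<bar>)"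
    unfolding dlt_def by (rule sum.cong) (simp_all add: eq)
  also have "\<dots> \<le> (1 - \<eta>) * (\<Sum>p\<in>V. \<bar>x p\<bar>)"
  proof (rule contract)
    show "\<forall>j\<in>V. (\<Sum>i\<in>V. Q (t + n) m i j) = 1" by (simp add: Q_colsum)
    show "\<forall>i\<in>V. \<forall>j\<in>V. 0 \<le> Q (t + n) m i j" by (simp add: Q_nonneg)
    show "(\<Sum>j\<in>V. x j) = 0" using assms by (simp add: x_def sum_subtractf Q_colsum)
  qed (use assms in auto)
  finally show ?thesis by (simp add: dlt_def x_def)
qed

lemma dlt0: assumes "j \<in> V" "l \<in> V" shows "dlt t 0 j l \<le> 2"
proof -
  have "dlt t 0 j l \<le> (\<Sum>i\<in>V. (if i = j then 1 else 0) + (if i = l then 1 else 0))"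
    unfolding dlt_def by (rule sum_mono) auto
  also have "\<dots> = 2" using assms finV by (simp add: sum.distrib)
  finally show ?thesis .
qed

lemma dlt_le2: assumes "j \<in> V" "l \<in> V" shows "dlt t m j l \<le> 2"
proof -
  have "dlt t (0+m) j l \<le> (1 - 0) * dlt t 0 j l"
    by (rule dlt_step[OF assms ikV[of 0]]) (simp add: Q_nonneg)
  then show ?thesis using dlt0[OF assms, of t] by simp
qed

abbreviation "K \<equiv> (2 * I - 1) * T + I * D"

lemma eta_le1: "mbar ^ K \<le> 1" using mbar0 mbar1 by (simp add: power_le_one)

lemma dlt_bound_q: assumes "j \<in> V" "l \<in> V"
  shows "dlt t (q * K + r) j l \<le> 2 * (1 - mbar ^ K) ^ q"
proof (induction q)
  case 0 then show ?case using dlt_le2[OF assms] by simp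
next
  case (Suc q)
  have g: "Ag 1 \<in> V" using I_pos by simp
  have "dlt t ((q * K + r) + K) j l \<le> (1 - mbar ^ K) * dlt t (q * K + r) j l"
    by (rule dlt_step[OF assms g]) (use positivity I_pos in auto)
  also have "\<dots> \<le> (1 - mbar ^ K) * (2 * (1 - mbar ^ K) ^ q)"
    by (rule mult_left_mono[OF Suc.IH]) (use eta_le1 in simp)
  also have "\<dots> = 2 * (1 - mbar ^ K) ^ Suc q" by simp
  finally show ?case by (simp add: add.commute add.left_commute)
qed

lemma dlt_bound: assumes "j \<in> V" "l \<in> V"
  shows "dlt t n j l \<le> 2 * (1 - mbar ^ K) ^ (n div K)"
  using dlt_bound_q[OF assms, of t "n div K" "n mod K"] unfolding div_mult_mod_eq .

lemma approx: assumes "r \<in> V" "j \<in> V" "\<forall>l\<in>V. 0 \<le> w l" "(\<Sum>l\<in>V. w l) = 1"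
  shows "\<bar>Q t n r j - (\<Sum>l\<in>V. Q t n r l * w l)\<bar> \<le> 2 * (1 - mbar ^ K) ^ (n div K)"
proof -
  have "Q t n r j = (\<Sum>l\<in>V. Q t n r j * w l)" using assms(4) by (simp add: sum_distrib_left[symmetric])
  then have "Q t n r j - (\<Sum>l\<in>V. Q t n r l * w l) = (\<Sum>l\<in>V. (Q t n r j - Q t n r l) * w l)"
    by (simp add: sum_subtractf left_diff_distrib)
  then have "\<bar>Q t n r j - (\<Sum>l\<in>V. Q t n r l * w l)\<bar> \<le> (\<Sum>l\<in>V. \<bar>(Q t n r j - Q t n r l) * w l\<bar>)"
    by (simp add: sum_abs)
  also have "\<dots> \<le> (\<Sum>l\<in>V. (2 * (1 - mbar ^ K) ^ (n div K)) * w l)"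
  proof (rule sum_mono)
    fix l assume l: "l \<in> V"
    have "\<bar>Q t n r j - Q t n r l\<bar> \<le> dlt t n j l"
      unfolding dlt_def by (rule member_le_sum[where f = "\<lambda>i. \<bar>Q t n i j - Q t n i l\<bar>"]) (auto simp: assms finV)
    also have "\<dots> \<le> 2 * (1 - mbar ^ K) ^ (n div K)" by (rule dlt_bound[OF assms(2) l])
    finally show "\<bar>(Q t n r j - Q t n r l) * w l\<bar> \<le> (2 * (1 - mbar ^ K) ^ (n div K)) * w l"
      using assms(3) l by (simp add: abs_mult mult_right_mono)
  qed
  also have "\<dots> = 2 * (1 - mbar ^ K) ^ (n div K)" using assms(4) by (simp add: sum_distrib_left[symmetric])
  finally show ?thesis .
qed
end



lemma ineq_big:
  fixes \<eta> :: real and K N :: nat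
  assumes "0 < \<eta>" "\<eta> < 1" "0 < K"
  shows "2 * (1 - \<eta>) ^ (Suc N div K) \<le> 2 * (1 + 1 / \<eta>) / (1 - \<eta>) * ((1 - \<eta>) powr (1 / real K)) ^ N"
proof -
  define b where "b = 1 - \<eta>"
  define q where "q = Suc N div K"
  have b: "0 < b" "b < 1" using assms by (auto simp: b_def)
  have "Suc N = q * K + Suc N mod K" unfolding q_def by simp
  moreover have "Suc N mod K < K" using assms(3) by simp
  ultimately have "N < (q + 1) * K" by (simp add: algebra_simps)
  then have "real N < (real q + 1) * real K" by (metis of_nat_1 of_nat_add of_nat_less_iff of_nat_mult)
  then have qle: "real N / real K - 1 \<le> real q" using assms(3) by (simp add: field_simps)
  have rhoN: "(b powr (1 / real K)) ^ N = b powr (real N / real K)"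
    using b by (simp add: powr_realpow[symmetric] powr_powr)
  have "b ^ q = b powr real q" using b by (simp add: powr_realpow)
  also have "\<dots> \<le> b powr (real N / real K - 1)" by (rule powr_mono'[OF qle]) (use b in auto)
  also have "\<dots> = b powr (real N / real K) / b" using b by (simp add: powr_diff)
  finally have 1: "b ^ q \<le> b powr (real N / real K) / b" .
  have 2: "b powr (real N / real K) / b \<le> (1 + 1 / \<eta>) / b * b powr (real N / real K)"
  proof -
    have "1 \<le> 1 + 1 / \<eta>" using assms by simp
    then have "1 * (b powr (real N / real K) / b) \<le> (1 + 1 / \<eta>) * (b powr (real N / real K) / b)"
      by (rule mult_right_mono) (use b in simp)
    then show ?thesis by simp
  qed
  have e: "2 * (1 + 1 / \<eta>) / b * b powr (real N / real K) = 2 * ((1 + 1 / \<eta>) / b * b powr (real N / real K))"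
    by simp
  from 1 2 e have fin: "2 * b ^ q \<le> 2 * (1 + 1 / \<eta>) / b * b powr (real N / real K)" by linarith
  show ?thesis unfolding b_def[symmetric] q_def[symmetric] rhoN by (rule fin)
qed

lemma ineq_small:
  fixes \<eta> :: real and K N :: nat
  assumes "0 < \<eta>" "\<eta> < 1" "0 < K" "N \<le> K"
  shows "1 \<le> 2 * (1 + 1 / \<eta>) / (1 - \<eta>) * ((1 - \<eta>) powr (1 / real K)) ^ N"
proof -
  define b where "b = 1 - \<eta>"
  have b: "0 < b" "b < 1" using assms by (auto simp: b_def)
  define \<rho> where "\<rho> = b powr (1 / real K)"
  have r: "0 \<le> \<rho>" "\<rho> \<le> 1" unfolding \<rho>_def using b powr_le1[of "1 / real K" b] by auto
  have rK: "\<rho> ^ K = b" unfolding \<rho>_def using b assms(3) by (simp add: powr_realpow[symmetric] powr_powr)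
  have "b \<le> \<rho> ^ N" using power_decreasing[OF assms(4) r] rK by simp
  then have "2 * (1 + 1 / \<eta>) / b * b \<le> 2 * (1 + 1 / \<eta>) / b * \<rho> ^ N"
    by (rule mult_left_mono) (use assms b in simp)
  moreover have "2 * (1 + 1 / \<eta>) / b * b = 2 * (1 + 1 / \<eta>)" using b by simp
  moreover have "1 \<le> 2 * (1 + 1 / \<eta>)" using assms by simp
  ultimately show ?thesis unfolding \<rho>_def b_def by linarith
qed

context setting begin

lemma K_pos: "0 < K"
proof -
  have "0 < 2 * I - 1" using I_pos by simp
  moreover have "0 < T" using T_pos by simp
  ultimately have "0 < (2 * I - 1) * T" by simp
  then show ?thesis by simp
qed

lemma eta_pos: "0 < mbar ^ K" using mbar0 by simp
lemma eta_lt1: "mbar ^ K < 1" using mbar0 mbar1 K_pos by (simp add: power_less_one_iff)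

definition xi where "xi k r = Q 0 (max (Suc k) K) r (Ag 1)"

lemma xi_stoch: "stochastic_vec V (xi k)"
  using I_pos by (simp add: stochastic_vec_def xi_def Q_nonneg Q_colsum)

lemma xi_pos: assumes "g \<in> {1..I}" shows "mbar ^ K \<le> xi k (Ag g)"
proof (cases "K \<le> Suc k")
  case True
  define s where "s = Suc k - K"
  have ms: "max (Suc k) K = s + K" using True by (simp add: s_def)
  have g: "Ag g \<in> V" "Ag 1 \<in> V" using assms I_pos by auto
  have "xi k (Ag g) = (\<Sum>l\<in>V. Q s K (Ag g) l * Q 0 s l (Ag 1))"
    unfolding xi_def ms using Q_assoc[OF g, of 0 s K] by simp
  also have "\<dots> \<ge> (\<Sum>l\<in>V. mbar ^ K * Q 0 s l (Ag 1))"
    by (rule sum_mono, rule mult_right_mono) (use positivity assms Q_nonneg in auto)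
  also have "(\<Sum>l\<in>V. mbar ^ K * Q 0 s l (Ag 1)) = mbar ^ K"
    using g by (simp add: sum_distrib_left[symmetric] Q_colsum)
  finally show ?thesis .
next
  case False
  then have "max (Suc k) K = K" by simp
  then show ?thesis unfolding xi_def using positivity[of "Ag 1" g 0] assms I_pos by simp
qed

lemma xi_bound: assumes "t \<le> k" "i \<in> V" "j \<in> V"
  shows "\<bar>Aprod I E a ik dl D t (k - t) i j - xi k i\<bar>
     \<le> 2 * (1 + 1 / mbar ^ K) / (1 - mbar ^ K) * ((1 - mbar ^ K) powr (1 / real K)) ^ (k - t)"
proof (cases "K \<le> Suc k")
  case True
  have g: "Ag 1 \<in> V" using I_pos by simp
  have ms: "max (Suc k) K = t + Suc (k - t)" using True assms(1) by simp
  have "xi k i = (\<Sum>l\<in>V. Q t (Suc (k - t)) i l * Q 0 t l (Ag 1))"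
    unfolding xi_def ms using Q_assoc[OF assms(2) g, of 0 t "Suc (k - t)"] by simp
  then have "\<bar>Aprod I E a ik dl D t (k - t) i j - xi k i\<bar> \<le> 2 * (1 - mbar ^ K) ^ (Suc (k - t) div K)"
    using approx[OF assms(2,3), of "\<lambda>l. Q 0 t l (Ag 1)" t "Suc (k - t)"] g
    by (simp add: Aprod_Q[OF assms(2,3)] Q_nonneg Q_colsum)
  also have "\<dots> \<le> 2 * (1 + 1 / mbar ^ K) / (1 - mbar ^ K) * ((1 - mbar ^ K) powr (1 / real K)) ^ (k - t)"
    by (rule ineq_big[OF eta_pos eta_lt1 K_pos])
  finally show ?thesis .
next
  case False
  have g: "Ag 1 \<in> V" using I_pos by simp
  have "\<bar>Aprod I E a ik dl D t (k - t) i j - xi k i\<bar> \<le> 1"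
    using Q_nonneg[of t "Suc (k - t)" i j] Q_le1[OF assms(2,3), of t "Suc (k - t)"]
      Q_nonneg[of 0 _ i "Ag 1"] Q_le1[OF assms(2) g, of 0]
    unfolding Aprod_Q[OF assms(2,3)] xi_def by (smt (verit))
  also have "1 \<le> 2 * (1 + 1 / mbar ^ K) / (1 - mbar ^ K) * ((1 - mbar ^ K) powr (1 / real K)) ^ (k - t)"
    by (rule ineq_small[OF eta_pos eta_lt1 K_pos]) (use False in simp)
  finally show ?thesis .
qed

lemma main:
  "let K1 = (2 * I - 1) * T + I * D;
         \<eta> = mbar ^ K1;
         C = 2 * (1 + 1 / mbar ^ K1) / (1 - mbar ^ K1);
         \<rho> = (1 - mbar ^ K1) powr (1 / real K1);
         V' = Vhat I E D
     in 0 < \<rho> \<and> \<rho> < 1 \<and>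
        (\<exists>\<xi> :: nat \<Rightarrow> node \<Rightarrow> real.
           (\<forall>k. stochastic_vec V' (\<xi> k)) \<and>
           (\<forall>k t. t \<le> k \<longrightarrow> (\<forall>i\<in>V'. \<forall>j\<in>V'.
              \<bar>Aprod I E a ik dl D t (k - t) i j - \<xi> k i\<bar> \<le> C * \<rho> ^ (k - t))) \<and>
           (\<forall>k. \<forall>i\<in>{1..I}. \<xi> k (Ag i) \<ge> \<eta>))"
proof -
  have b: "0 < 1 - mbar ^ K" "1 - mbar ^ K < 1" using eta_pos eta_lt1 by auto
  have r1: "0 < (1 - mbar ^ K) powr (1 / real K)" using b by simp
  have kp: "0 < 1 / real K" using K_pos by (simp only: zero_less_divide_1_iff of_nat_0_less_iff)
  have "(1 - mbar ^ K) powr (1 / real K) < 1 powr (1 / real K)"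
    by (rule powr_less_mono2[OF kp]) (use b in auto)
  then have r2: "(1 - mbar ^ K) powr (1 / real K) < 1" using powr_one_eq_one by metis
  show ?thesis unfolding Let_def
    using r1 r2 xi_stoch xi_bound xi_pos by blast
qed

end

theorem lemma4:
  fixes I T D :: nat and E :: "(nat \<times> nat) set" and a :: "nat \<Rightarrow> nat \<Rightarrow> real"
    and mbar :: real and ik :: "nat \<Rightarrow> nat" and dl :: "nat \<Rightarrow> nat \<Rightarrow> nat"
  assumes E_sub: "E \<subseteq> {1..I} \<times> {1..I}"
    and no_loops: "\<forall>i. (i, i) \<notin> E"
    and strong: "\<forall>i\<in>{1..I}. \<forall>j\<in>{1..I}. (i, j) \<in> E\<^sup>*"
    and mbar: "0 < mbar" "mbar < 1"
    and col_stoch: "\<forall>j\<in>{1..I}. (\<Sum>i\<in>{1..I}. a i j) = 1"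
    and diag: "\<forall>i\<in>{1..I}. a i i \<ge> mbar"
    and edge: "\<forall>i j. (j, i) \<in> E \<longrightarrow> a i j \<ge> mbar"
    and zero: "\<forall>i\<in>{1..I}. \<forall>j\<in>{1..I}. i \<noteq> j \<and> (j, i) \<notin> E \<longrightarrow> a i j = 0"
    and ik_V: "\<forall>k. ik k \<in> {1..I}"
    and ik_T: "\<forall>k. \<forall>i\<in>{1..I}. \<exists>s<T. ik (k + s) = i"
    and delays: "\<forall>k. \<forall>j\<in>Nin E (ik k). dl k j \<le> D"
  shows
    "let K1 = (2 * I - 1) * T + I * D;
         \<eta> = mbar ^ K1;
         C = 2 * (1 + 1 / mbar ^ K1) / (1 - mbar ^ K1);
         \<rho> = (1 - mbar ^ K1) powr (1 / real K1);
         V' = Vhat I E D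
     in 0 < \<rho> \<and> \<rho> < 1 \<and>
        (\<exists>\<xi> :: nat \<Rightarrow> node \<Rightarrow> real.
           (\<forall>k. stochastic_vec V' (\<xi> k)) \<and>
           (\<forall>k t. t \<le> k \<longrightarrow> (\<forall>i\<in>V'. \<forall>j\<in>V'.
              \<bar>Aprod I E a ik dl D t (k - t) i j - \<xi> k i\<bar> \<le> C * \<rho> ^ (k - t))) \<and>
           (\<forall>k. \<forall>i\<in>{1..I}. \<xi> k (Ag i) \<ge> \<eta>))"
proof -
  interpret setting I T D E a mbar ik dl
    apply unfold_locales
    using assms by auto
  show ?thesis by (rule main)
qed

end
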